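(* Let $\Omega$ be a finite-dimensional real Euclidean space and $f_1,\dots,f_N\colon\Omega\to\mathbb{R}$ continuous convex functions (not assumed strongly convex) such that $E=\frac1N\sum_{j=1}^N f_j$ is coercive, and let $\theta^*$ be a minimizer of $E$. For $\alpha>0$ let $f_j^\alpha(\theta)=f_j(\theta)+\frac\alpha2\|\theta\|^2$ and $E^\alpha=\frac1N\sum_j f_j^\alpha$. Run DualFL (described in the context) on the functions $f_1^\alpha,\dots,f_N^\alpha$ with hyperparameters $\rho=0$ and $\nu=\alpha$, and suppose that for some $\gamma>0$ the local iterates satisfy $\Gamma^{n,j}(\theta_j^{(n+1)})\le\frac{1}{N\nu(n+1)^{4+\gamma}}$ for all $1\le j\le N$, $n\ge0$. Then the generated sequence $\{\theta^{(n)}\}$ (which depends on $\alpha$) satisfies \[ E(\theta^{(n)})-E(\theta^* )\to0\quad\text{as } n\to\infty \text{ and } \alpha\to0^+ . \]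
   Context: $h^*$ denotes the Legendre--Fenchel conjugate. DualFL applied to convex functions $\tilde f_1,\dots,\tilde f_N$ (here $\tilde f_j=f_j^\alpha$) with hyperparameters $\rho\ge0$, $\nu>0$: set $\theta^{(0)}=\theta_j^{(0)}=0$, $\zeta_j^{(0)}=\zeta_j^{(-1)}=0$, $t_0=1$. For $n=0,1,\dots$: each client $j$ computes an approximate minimizer $\theta_j^{(n+1)}$ of $E^{n,j}(\theta)=\tilde f_j(\theta)-\nu\langle\zeta_j^{(n)},\theta\rangle$; $\theta^{(n+1)}=\frac1N\sum_j\theta_j^{(n+1)}$; $t_{n+1}=\frac{1-\rho t_n^2+\sqrt{(1-\rho t_n^2)^2+4t_n^2}}{2}$, $\beta_n=\frac{t_n-1}{t_{n+1}}\cdot\frac{1-t_{n+1}\rho}{1-\rho}$; $\zeta_j^{(n+1)}=(1+\beta_n)(\zeta_j^{(n)}+\theta^{(n+1)}-\theta_j^{(n+1)})-\beta_n(\zeta_j^{(n-1)}+\theta^{(n)}-\theta_j^{(n)})$. Primal-dual gap: $g_j=\tilde f_j-\frac\nu2\|\cdot\|^2$, $E^{n,j}_{\mathrm d}(\xi)=g_j^*(\xi)+\frac1{2\nu}\|\xi-\nu\zeta_j^{(n)}\|^2$, $\Gamma^{n,j}(\theta)=E^{n,j}(\theta)+E^{n,j}_{\mathrm d}(\nu(\zeta_j^{(n)}-\theta))$. *)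

theory Defs
  imports "HOL-Analysis.Analysis"
begin

text \<open>Legendre--Fenchel conjugate, valued in the extended reals (it may be +infinity).\<close>
definition fconj :: "('a::real_inner \<Rightarrow> real) \<Rightarrow> 'a \<Rightarrow> ereal" where
  "fconj h \<xi> = (SUP \<theta>. ereal (inner \<xi> \<theta> - h \<theta>))"

definition avg_obj :: "nat \<Rightarrow> (nat \<Rightarrow> 'a \<Rightarrow> real) \<Rightarrow> 'a \<Rightarrow> real" where
  "avg_obj N f \<theta> = (1 / real N) * (\<Sum>j\<in>{1..N}. f j \<theta>)"

definition regul :: "real \<Rightarrow> ('a::real_normed_vector \<Rightarrow> real) \<Rightarrow> 'a \<Rightarrow> real" where
  "regul \<alpha> g \<theta> = g \<theta> + \<alpha> / 2 * (norm \<theta>)\<^sup>2"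

primrec dualfl_t :: "real \<Rightarrow> nat \<Rightarrow> real" where
  "dualfl_t \<rho> 0 = 1"
| "dualfl_t \<rho> (Suc n) =
     (1 - \<rho> * (dualfl_t \<rho> n)\<^sup>2 + sqrt ((1 - \<rho> * (dualfl_t \<rho> n)\<^sup>2)\<^sup>2 + 4 * (dualfl_t \<rho> n)\<^sup>2)) / 2"

definition dualfl_beta :: "real \<Rightarrow> nat \<Rightarrow> real" where
  "dualfl_beta \<rho> n = (dualfl_t \<rho> n - 1) / dualfl_t \<rho> (Suc n)
                       * ((1 - dualfl_t \<rho> (Suc n) * \<rho>) / (1 - \<rho>))"

text \<open>Server average theta^(n) = (1/N) sum_j theta_j^(n); here th n j = theta_j^(n).\<close>
definition dualfl_avg :: "nat \<Rightarrow> (nat \<Rightarrow> nat \<Rightarrow> 'a::real_vector) \<Rightarrow> nat \<Rightarrow> 'a" where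
  "dualfl_avg N th n = (1 / real N) *\<^sub>R (\<Sum>j\<in>{1..N}. th n j)"

text \<open>Dual variables zeta_j^(n) (with zeta_j^(0) = zeta_j^(-1) = 0).\<close>
fun dualfl_zeta :: "real \<Rightarrow> nat \<Rightarrow> (nat \<Rightarrow> nat \<Rightarrow> 'a::real_vector) \<Rightarrow> nat \<Rightarrow> nat \<Rightarrow> 'a" where
  "dualfl_zeta \<rho> N th j 0 = 0"
| "dualfl_zeta \<rho> N th j (Suc 0) =
     (1 + dualfl_beta \<rho> 0) *\<^sub>R (0 + dualfl_avg N th 1 - th 1 j)
     - dualfl_beta \<rho> 0 *\<^sub>R (0 + dualfl_avg N th 0 - th 0 j)"
| "dualfl_zeta \<rho> N th j (Suc (Suc n)) =
     (1 + dualfl_beta \<rho> (Suc n)) *\<^sub>R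
        (dualfl_zeta \<rho> N th j (Suc n) + dualfl_avg N th (Suc (Suc n)) - th (Suc (Suc n)) j)
     - dualfl_beta \<rho> (Suc n) *\<^sub>R
        (dualfl_zeta \<rho> N th j n + dualfl_avg N th (Suc n) - th (Suc n) j)"

text \<open>Local primal energy E^{n,j}, local dual energy E_d^{n,j}, and primal-dual gap Gamma^{n,j};
  F is the (tilde) local function, z = zeta_j^(n).\<close>
definition dualfl_local :: "('a::real_inner \<Rightarrow> real) \<Rightarrow> real \<Rightarrow> 'a \<Rightarrow> 'a \<Rightarrow> real" where
  "dualfl_local F \<nu> z \<theta> = F \<theta> - \<nu> * inner z \<theta>"

definition dualfl_dual :: "('a::real_inner \<Rightarrow> real) \<Rightarrow> real \<Rightarrow> 'a \<Rightarrow> 'a \<Rightarrow> ereal" where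
  "dualfl_dual F \<nu> z \<xi> =
     fconj (\<lambda>x. F x - \<nu> / 2 * (norm x)\<^sup>2) \<xi> + ereal (1 / (2 * \<nu>) * (norm (\<xi> - \<nu> *\<^sub>R z))\<^sup>2)"

definition dualfl_gap :: "('a::real_inner \<Rightarrow> real) \<Rightarrow> real \<Rightarrow> 'a \<Rightarrow> 'a \<Rightarrow> ereal" where
  "dualfl_gap F \<nu> z \<theta> = ereal (dualfl_local F \<nu> z \<theta>) + dualfl_dual F \<nu> z (\<nu> *\<^sub>R (z - \<theta>))"

end

theory Submission imports Defs begin

lemma gap_star:
  fixes F :: "'a::real_inner \<Rightarrow> real"
  assumes g: "dualfl_gap F \<nu> z \<theta> \<le> ereal d" and nu: "\<nu> > 0"
  shows "F \<theta> + \<nu> * inner z (u - \<theta>) + \<nu> / 2 * (norm (u - \<theta>))\<^sup>2 - d \<le> F u"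
proof -
  define \<xi> where "\<xi> = \<nu> *\<^sub>R (z - \<theta>)"
  define h where "h = (\<lambda>x. F x - \<nu> / 2 * (norm x)\<^sup>2)"
  define q where "q = 1 / (2 * \<nu>) * (norm (\<xi> - \<nu> *\<^sub>R z))\<^sup>2"
  have c: "ereal (inner \<xi> u - h u) \<le> fconj h \<xi>"
    unfolding fconj_def by (rule SUP_upper) auto
  have "ereal (dualfl_local F \<nu> z \<theta>) + (ereal (inner \<xi> u - h u) + ereal q) \<le> dualfl_gap F \<nu> z \<theta>"
    unfolding dualfl_gap_def dualfl_dual_def \<xi>_def[symmetric] h_def[symmetric] q_def[symmetric]
    by (intro add_mono c order_refl)
  also have "\<dots> \<le> ereal d" by fact
  finally have r: "dualfl_local F \<nu> z \<theta> + (inner \<xi> u - h u + q) \<le> d" by simp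
  have q: "q = \<nu> / 2 * (norm \<theta>)\<^sup>2"
    unfolding q_def \<xi>_def using nu
    by (simp add: algebra_simps power2_eq_square)
  have n: "(norm (u - \<theta>))\<^sup>2 = (norm u)\<^sup>2 - 2 * inner u \<theta> + (norm \<theta>)\<^sup>2"
    by (simp add: power2_norm_eq_inner inner_diff_left inner_diff_right inner_commute)
  show ?thesis using r unfolding q dualfl_local_def h_def \<xi>_def n
    by (simp add: algebra_simps inner_diff_left inner_diff_right inner_commute)
qed

lemma t_suc: "dualfl_t 0 (Suc n) = (1 + sqrt (1 + 4 * (dualfl_t 0 n)\<^sup>2)) / 2"
  by simp

declare dualfl_t.simps(2)[simp del]

lemma t_ge1: "dualfl_t 0 n \<ge> 1"
proof (induction n)
  case (Suc n)
  have "sqrt (1 + 4 * (dualfl_t 0 n)\<^sup>2) \<ge> 1" by simp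
  then show ?case unfolding t_suc by (simp add: field_simps)
qed simp

lemma t_lower: "dualfl_t 0 (Suc n) \<ge> dualfl_t 0 n + 1/2"
proof -
  let ?t = "dualfl_t 0 n"
  have "sqrt (1 + 4 * ?t\<^sup>2) \<ge> sqrt ((2 * ?t)\<^sup>2)" by (intro real_sqrt_le_mono) (simp add: power2_eq_square)
  also have "sqrt ((2 * ?t)\<^sup>2) = 2 * ?t" using t_ge1[of n] by (simp only: real_sqrt_abs)
  finally show ?thesis unfolding t_suc by (simp add: field_simps)
qed

lemma t_upper: "dualfl_t 0 (Suc n) \<le> dualfl_t 0 n + 1"
proof -
  let ?t = "dualfl_t 0 n"
  have "sqrt (1 + 4 * ?t\<^sup>2) \<le> sqrt ((2 * ?t + 1)\<^sup>2)" using t_ge1[of n]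
    by (intro real_sqrt_le_mono) (simp add: power2_eq_square algebra_simps)
  also have "sqrt ((2 * ?t + 1)\<^sup>2) = 2 * ?t + 1" using t_ge1[of n] by (simp only: real_sqrt_abs)
  finally show ?thesis unfolding t_suc by (simp add: field_simps)
qed

lemma t_sq: "(dualfl_t 0 (Suc n))\<^sup>2 - dualfl_t 0 (Suc n) = (dualfl_t 0 n)\<^sup>2"
proof -
  let ?t = "dualfl_t 0 n"
  let ?s = "sqrt (1 + 4 * ?t\<^sup>2)"
  have s: "?s\<^sup>2 = 1 + 4 * ?t\<^sup>2" by simp
  show ?thesis unfolding t_suc using s by (simp add: power2_eq_square field_simps)
qed

lemma t_ge: "dualfl_t 0 n \<ge> 1 + real n / 2"
proof (induction n)
  case (Suc n)
  have "real (Suc n) / 2 = real n / 2 + 1 / 2" by simp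
  then show ?case using Suc t_lower[of n] by linarith
qed simp

lemma t_le: "dualfl_t 0 n \<le> real n + 1"
proof (induction n)
  case (Suc n) then show ?case using t_upper[of n] by simp
qed simp

lemma beta_eq: "dualfl_beta 0 n = (dualfl_t 0 n - 1) / dualfl_t 0 (Suc n)"
  unfolding dualfl_beta_def by simp

lemma beta_bounds: "0 \<le> dualfl_beta 0 n" "dualfl_beta 0 n \<le> 1"
proof -
  have a: "dualfl_t 0 n - 1 \<ge> 0" "dualfl_t 0 (Suc n) > 0" "dualfl_t 0 n - 1 \<le> dualfl_t 0 (Suc n)"
    using t_ge1[of n] t_ge1[of "Suc n"] t_lower[of n] by auto
  show "0 \<le> dualfl_beta 0 n" unfolding beta_eq using a by simp
  show "dualfl_beta 0 n \<le> 1" unfolding beta_eq using a by (simp add: divide_le_eq_1)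
qed

lemma t_beta: "dualfl_t 0 (Suc n) * dualfl_beta 0 n = dualfl_t 0 n - 1"
  unfolding beta_eq using t_ge1[of "Suc n"] by (simp del: dualfl_t.simps)


lemma id1: fixes zz g a u :: "'a::real_inner"
  shows "inner (zz - g) (a + g) + 1/2*(norm ((zz - g) - zz))\<^sup>2 - inner u (a + g)
     = inner g (zz - u) - 1/2*(norm g)\<^sup>2 + inner ((zz - g) - u) a"
  by (simp add: inner_simps power2_norm_eq_inner algebra_simps inner_commute)

lemma id2: fixes zz g xn u :: "'a::real_inner"
  shows "t * inner g (zz - u) + (t\<^sup>2 - t) * inner g (zz - xn) - t\<^sup>2 / 2 * (norm g)\<^sup>2
     = 1/2 * (norm (t *\<^sub>R zz - (t - 1) *\<^sub>R xn - u))\<^sup>2 - 1/2 * (norm (t *\<^sub>R (zz - g) - (t - 1) *\<^sub>R xn - u))\<^sup>2"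
  unfolding power2_norm_eq_inner by (simp add: inner_simps algebra_simps inner_commute power2_eq_square)

lemma sum_inv_sq: "(\<Sum>k\<le>n. 1 / (real k + 1)\<^sup>2) \<le> 2 - 1 / (real n + 1)"
proof (induction n)
  case (Suc n)
  have "1 / (real n + 2)\<^sup>2 \<le> 1 / ((real n + 1) * (real n + 2))"
    by (rule divide_left_mono) (auto simp: power2_eq_square)
  also have "\<dots> = 1 / (real n + 1) - 1 / (real n + 2)" by (simp add: field_simps)
  finally have "1 / (real n + 2)\<^sup>2 \<le> 1 / (real n + 1) - 1 / (real n + 2)" .
  then show ?case using Suc by (simp add: add.commute)
qed simp

locale dfl =
  fixes N :: nat and f :: "nat \<Rightarrow> 'a::euclidean_space \<Rightarrow> real" and th :: "nat \<Rightarrow> nat \<Rightarrow> 'a"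
    and \<alpha> :: real and dl :: "nat \<Rightarrow> real"
  assumes N1: "N \<ge> 1" and apos: "\<alpha> > 0"
    and cont: "\<And>j. j \<in> {1..N} \<Longrightarrow> continuous_on UNIV (f j)"
    and init: "\<And>j. j \<in> {1..N} \<Longrightarrow> th 0 j = 0"
    and dl_nonneg: "\<And>n. 0 \<le> dl n"
    and dl_le: "\<And>n. dl n \<le> 1 / (real N * \<alpha> * (real n + 1)^4)"
    and star: "\<And>n j u. j \<in> {1..N} \<Longrightarrow> regul \<alpha> (f j) (th (Suc n) j)
        + \<alpha> * inner (dualfl_zeta 0 N th j n) (u - th (Suc n) j)
        + \<alpha> / 2 * (norm (u - th (Suc n) j))\<^sup>2 - dl n \<le> regul \<alpha> (f j) u"
begin

abbreviation J where "J \<equiv> {1..N}"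
abbreviation F where "F j \<equiv> regul \<alpha> (f j)"
abbreviation z where "z n j \<equiv> dualfl_zeta 0 N th j n"
abbreviation avg where "avg n \<equiv> dualfl_avg N th n"
abbreviation tt where "tt n \<equiv> dualfl_t 0 n"
abbreviation bt where "bt n \<equiv> dualfl_beta 0 n"

definition x :: "nat \<Rightarrow> nat \<Rightarrow> 'a" where
  "x n j = (case n of 0 \<Rightarrow> 0 | Suc m \<Rightarrow> z m j + avg (Suc m) - th (Suc m) j)"
definition pin :: "(nat \<Rightarrow> 'a) \<Rightarrow> (nat \<Rightarrow> 'a) \<Rightarrow> real" where
  "pin a b = (\<Sum>j\<in>J. inner (a j) (b j))"
definition nsq :: "(nat \<Rightarrow> 'a) \<Rightarrow> real" where
  "nsq a = (\<Sum>j\<in>J. (norm (a j))\<^sup>2)"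
definition Psij :: "nat \<Rightarrow> 'a \<Rightarrow> real" where
  "Psij j w = Sup (range (\<lambda>u. inner w u - F j u / \<alpha>))"
definition Psi :: "(nat \<Rightarrow> 'a) \<Rightarrow> real" where
  "Psi \<zeta> = (\<Sum>j\<in>J. Psij j (\<zeta> j))"
definition D :: "nat \<Rightarrow> real" where
  "D n = real N * dl n / \<alpha>"

lemma x0[simp]: "x 0 j = 0" by (simp add: x_def)
lemma xS: "x (Suc m) j = z m j + avg (Suc m) - th (Suc m) j" by (simp add: x_def)

lemma avg0: "avg 0 = 0"
  unfolding dualfl_avg_def using init by simp

lemma Navg: "real N *\<^sub>R avg n = (\<Sum>j\<in>J. th n j)"
  unfolding dualfl_avg_def using N1 by simp

lemma z_rec: "j \<in> J \<Longrightarrow> z (Suc n) j = x (Suc n) j + bt n *\<^sub>R (x (Suc n) j - x n j)"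
proof (cases n)
  case 0
  assume j: "j \<in> J"
  show ?thesis using 0 init[OF j] avg0 by (simp add: xS algebra_simps)
next
  case (Suc m)
  show ?thesis unfolding Suc by (simp add: xS algebra_simps)
qed

lemma sums0: "(\<Sum>j\<in>J. z n j) = 0 \<and> (\<Sum>j\<in>J. x n j) = 0"
proof (induction n rule: nat_less_induct)
  case (1 n)
  have xs: "(\<Sum>j\<in>J. x (Suc m) j) = (\<Sum>j\<in>J. z m j)" for m
    using Navg[of "Suc m"] by (simp add: xS sum.distrib sum_subtractf sum_constant_scaleR)
  show ?case
  proof (cases n)
    case 0 then show ?thesis by simp
  next
    case (Suc m)
    have zm: "(\<Sum>j\<in>J. z m j) = 0" using 1 Suc by auto
    have xm: "(\<Sum>j\<in>J. x m j) = 0" using 1 Suc by auto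
    have xsm: "(\<Sum>j\<in>J. x (Suc m) j) = 0" using xs zm by simp
    have "(\<Sum>j\<in>J. z (Suc m) j) = (\<Sum>j\<in>J. x (Suc m) j + bt m *\<^sub>R (x (Suc m) j - x m j))"
      by (rule sum.cong) (auto simp: z_rec)
    also have "\<dots> = 0" using xsm xm by (simp add: sum.distrib scaleR_sum_right[symmetric] sum_subtractf)
    finally show ?thesis using Suc xsm by simp
  qed
qed

lemma sumz: "(\<Sum>j\<in>J. z n j) = 0" and sumx: "(\<Sum>j\<in>J. x n j) = 0"
  using sums0 by auto

lemma U1: assumes j: "j \<in> J"
  shows "inner w u - F j u / \<alpha> \<le> inner w (th (Suc n) j) - F j (th (Suc n) j) / \<alpha>
           + 1/2 * (norm (w - z n j))\<^sup>2 + dl n / \<alpha>"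
proof -
  let ?t = "th (Suc n) j"
  have s: "F j ?t + \<alpha> * inner (z n j) (u - ?t) + \<alpha> / 2 * (norm (u - ?t))\<^sup>2 - dl n \<le> F j u"
    using star[OF j] .
  have s2: "F j ?t / \<alpha> + inner (z n j) (u - ?t) + 1 / 2 * (norm (u - ?t))\<^sup>2 - dl n / \<alpha> \<le> F j u / \<alpha>"
  proof -
    have "(F j ?t + \<alpha> * inner (z n j) (u - ?t) + \<alpha> / 2 * (norm (u - ?t))\<^sup>2 - dl n) / \<alpha> \<le> F j u / \<alpha>"
      using s apos by (simp add: divide_right_mono)
    moreover have "(F j ?t + \<alpha> * inner (z n j) (u - ?t) + \<alpha> / 2 * (norm (u - ?t))\<^sup>2 - dl n) / \<alpha>
       = F j ?t / \<alpha> + inner (z n j) (u - ?t) + 1 / 2 * (norm (u - ?t))\<^sup>2 - dl n / \<alpha>"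
      using apos by (simp add: field_simps)
    ultimately show ?thesis by simp
  qed
  have q: "inner (w - z n j) (u - ?t) - 1/2 * (norm (u - ?t))\<^sup>2 \<le> 1/2 * (norm (w - z n j))\<^sup>2"
  proof -
    have "0 \<le> (norm ((w - z n j) - (u - ?t)))\<^sup>2" by simp
    then show ?thesis
      by (simp add: power2_norm_eq_inner inner_diff_left inner_diff_right inner_commute algebra_simps)
  qed
  have e: "inner w u = inner w ?t + inner (w - z n j) (u - ?t) + inner (z n j) (u - ?t)"
    by (simp add: inner_diff_left inner_diff_right)
  show ?thesis using s2 q e by linarith
qed

lemma bdd: assumes "j \<in> J" shows "bdd_above (range (\<lambda>u. inner w u - F j u / \<alpha>))"
proof (rule bdd_aboveI2)
  fix u show "inner w u - F j u / \<alpha> \<le> inner w (th (Suc 0) j) - F j (th (Suc 0) j) / \<alpha>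
           + 1/2 * (norm (w - z 0 j))\<^sup>2 + dl 0 / \<alpha>" by (rule U1[OF assms])
qed

lemma Psij_ge: "j \<in> J \<Longrightarrow> inner w u - F j u / \<alpha> \<le> Psij j w"
  unfolding Psij_def by (rule cSup_upper[OF _ bdd]) auto

lemma Psij_le: "j \<in> J \<Longrightarrow> Psij j w \<le> inner w (th (Suc n) j) - F j (th (Suc n) j) / \<alpha>
           + 1/2 * (norm (w - z n j))\<^sup>2 + dl n / \<alpha>"
  unfolding Psij_def by (rule cSup_least) (use U1[of j w _ n] in auto)

end
context dfl begin

lemma Psi_le: "Psi w \<le> (\<Sum>j\<in>J. inner (w j) (th (Suc n) j) - F j (th (Suc n) j) / \<alpha>
           + 1/2 * (norm (w j - z n j))\<^sup>2) + D n"
proof -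
  have "Psi w \<le> (\<Sum>j\<in>J. inner (w j) (th (Suc n) j) - F j (th (Suc n) j) / \<alpha>
           + 1/2 * (norm (w j - z n j))\<^sup>2 + dl n / \<alpha>)"
    unfolding Psi_def by (rule sum_mono) (rule Psij_le, simp)
  also have "\<dots> = (\<Sum>j\<in>J. inner (w j) (th (Suc n) j) - F j (th (Suc n) j) / \<alpha>
           + 1/2 * (norm (w j - z n j))\<^sup>2) + D n"
    by (simp add: sum.distrib D_def)
  finally show ?thesis .
qed

lemma Psi_ge: "(\<Sum>j\<in>J. inner (w j) (th (Suc n) j) - F j (th (Suc n) j) / \<alpha>) \<le> Psi w"
  unfolding Psi_def by (rule sum_mono) (rule Psij_ge, simp)

lemma KEY:
  assumes u: "(\<Sum>j\<in>J. u j) = 0"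
  shows "Psi (x (Suc n)) \<le> Psi u + pin (\<lambda>j. z n j - x (Suc n) j) (\<lambda>j. z n j - u j)
           - 1/2 * nsq (\<lambda>j. z n j - x (Suc n) j) + D n"
proof -
  let ?g = "\<lambda>j. th (Suc n) j - avg (Suc n)"
  have gx: "z n j - x (Suc n) j = ?g j" for j by (simp add: xS algebra_simps)
  have xg: "x (Suc n) j = z n j - ?g j" for j by (simp add: xS algebra_simps)
  have tg: "th (Suc n) j = avg (Suc n) + ?g j" for j by simp
  have A: "Psi (x (Suc n)) - Psi u \<le> (\<Sum>j\<in>J. inner (x (Suc n) j) (th (Suc n) j)
           + 1/2 * (norm (x (Suc n) j - z n j))\<^sup>2 - inner (u j) (th (Suc n) j)) + D n"
    using Psi_le[of "x (Suc n)" n] Psi_ge[of u n]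
    by (simp add: sum_subtractf sum.distrib)
  have B: "(\<Sum>j\<in>J. inner (x (Suc n) j) (th (Suc n) j)
           + 1/2 * (norm (x (Suc n) j - z n j))\<^sup>2 - inner (u j) (th (Suc n) j))
        = (\<Sum>j\<in>J. inner (?g j) (z n j - u j) - 1/2*(norm (?g j))\<^sup>2 + inner ((z n j - ?g j) - u j) (avg (Suc n)))"
    apply (rule sum.cong, simp)
    apply (subst (1 2) tg)
    apply (subst (1 2) xg)
    apply (rule id1)
    done
  have C: "(\<Sum>j\<in>J. inner ((z n j - ?g j) - u j) (avg (Suc n))) = 0"
  proof -
    have "(\<Sum>j\<in>J. inner ((z n j - ?g j) - u j) (avg (Suc n)))
          = inner (\<Sum>j\<in>J. (x (Suc n) j - u j)) (avg (Suc n))"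
      by (simp add: inner_sum_left xg)
    also have "\<dots> = 0" using sumx[of "Suc n"] u by (simp add: sum_subtractf)
    finally show ?thesis .
  qed
  show ?thesis using A B C unfolding pin_def nsq_def gx
    by (simp add: sum.distrib sum_subtractf sum_distrib_left)
qed

lemma LS:
  assumes u: "(\<Sum>j\<in>J. u j) = 0"
  shows "(tt n)\<^sup>2 * (Psi (x (Suc n)) - Psi u)
           + 1/2 * nsq (\<lambda>j. tt n *\<^sub>R x (Suc n) j - (tt n - 1) *\<^sub>R x n j - u j)
         \<le> ((tt n)\<^sup>2 - tt n) * (Psi (x n) - Psi u)
           + 1/2 * nsq (\<lambda>j. tt n *\<^sub>R z n j - (tt n - 1) *\<^sub>R x n j - u j) + (tt n)\<^sup>2 * D n"
proof -
  let ?t = "tt n"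
  let ?g = "\<lambda>j. z n j - x (Suc n) j"
  have t1: "?t \<ge> 1" by (rule t_ge1)
  have A: "Psi (x (Suc n)) - Psi u \<le> pin ?g (\<lambda>j. z n j - u j) - 1/2 * nsq ?g + D n"
    using KEY[OF u, of n] by simp
  have B: "Psi (x (Suc n)) - Psi (x n) \<le> pin ?g (\<lambda>j. z n j - x n j) - 1/2 * nsq ?g + D n"
    using KEY[OF sumx[of n], of n] by simp
  have A': "?t * (Psi (x (Suc n)) - Psi u) \<le> ?t * (pin ?g (\<lambda>j. z n j - u j) - 1/2 * nsq ?g + D n)"
    using A t1 by (intro mult_left_mono) auto
  have B': "(?t\<^sup>2 - ?t) * (Psi (x (Suc n)) - Psi (x n)) \<le> (?t\<^sup>2 - ?t) * (pin ?g (\<lambda>j. z n j - x n j) - 1/2 * nsq ?g + D n)"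
    using B t1 by (intro mult_left_mono) (auto simp: power2_eq_square)
  have I: "?t * pin ?g (\<lambda>j. z n j - u j) + (?t\<^sup>2 - ?t) * pin ?g (\<lambda>j. z n j - x n j) - ?t\<^sup>2 / 2 * nsq ?g
     = 1/2 * nsq (\<lambda>j. ?t *\<^sub>R z n j - (?t - 1) *\<^sub>R x n j - u j)
       - 1/2 * nsq (\<lambda>j. ?t *\<^sub>R x (Suc n) j - (?t - 1) *\<^sub>R x n j - u j)"
  proof -
    have "?t * pin ?g (\<lambda>j. z n j - u j) + (?t\<^sup>2 - ?t) * pin ?g (\<lambda>j. z n j - x n j) - ?t\<^sup>2 / 2 * nsq ?g
      = (\<Sum>j\<in>J. ?t * inner (?g j) (z n j - u j) + (?t\<^sup>2 - ?t) * inner (?g j) (z n j - x n j) - ?t\<^sup>2 / 2 * (norm (?g j))\<^sup>2)"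
      unfolding pin_def nsq_def by (simp add: sum.distrib sum_subtractf sum_distrib_left)
    also have "\<dots> = (\<Sum>j\<in>J. 1/2 * (norm (?t *\<^sub>R z n j - (?t - 1) *\<^sub>R x n j - u j))\<^sup>2
         - 1/2 * (norm (?t *\<^sub>R (z n j - ?g j) - (?t - 1) *\<^sub>R x n j - u j))\<^sup>2)"
      by (rule sum.cong[OF refl], rule id2)
    also have "\<dots> = 1/2 * nsq (\<lambda>j. ?t *\<^sub>R z n j - (?t - 1) *\<^sub>R x n j - u j)
       - 1/2 * nsq (\<lambda>j. ?t *\<^sub>R x (Suc n) j - (?t - 1) *\<^sub>R x n j - u j)"
      unfolding nsq_def by (simp add: sum_subtractf sum_distrib_left)
    finally show ?thesis .
  qed
  have "?t\<^sup>2 * (Psi (x (Suc n)) - Psi u) - (?t\<^sup>2 - ?t) * (Psi (x n) - Psi u)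
      = ?t * (Psi (x (Suc n)) - Psi u) + (?t\<^sup>2 - ?t) * (Psi (x (Suc n)) - Psi (x n))"
    by (simp add: algebra_simps power2_eq_square)
  also have "\<dots> \<le> ?t * (pin ?g (\<lambda>j. z n j - u j) - 1/2 * nsq ?g + D n)
        + (?t\<^sup>2 - ?t) * (pin ?g (\<lambda>j. z n j - x n j) - 1/2 * nsq ?g + D n)"
    using A' B' by linarith
  also have "\<dots> = ?t * pin ?g (\<lambda>j. z n j - u j) + (?t\<^sup>2 - ?t) * pin ?g (\<lambda>j. z n j - x n j) - ?t\<^sup>2 / 2 * nsq ?g
       + ?t\<^sup>2 * D n"
    by (simp add: field_simps power2_eq_square)
  finally show ?thesis using I by linarith
qed

end
context dfl begin

lemma nsq_scale: "nsq (\<lambda>j. c *\<^sub>R v j) = c\<^sup>2 * nsq v"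
  unfolding nsq_def by (simp add: sum_distrib_left power_mult_distrib)

lemma nsq_nonneg: "0 \<le> nsq v"
  unfolding nsq_def by (rule sum_nonneg) simp

lemma nsq_comp: "j \<in> J \<Longrightarrow> (norm (v j))\<^sup>2 \<le> nsq v"
  unfolding nsq_def by (rule member_le_sum) auto

lemma w_eq: assumes j: "j \<in> J"
  shows "tt (Suc m) *\<^sub>R z (Suc m) j - (tt (Suc m) - 1) *\<^sub>R x (Suc m) j
       = tt m *\<^sub>R x (Suc m) j - (tt m - 1) *\<^sub>R x m j"
proof -
  have "tt (Suc m) *\<^sub>R z (Suc m) j - (tt (Suc m) - 1) *\<^sub>R x (Suc m) j
      = x (Suc m) j + (tt (Suc m) * bt m) *\<^sub>R (x (Suc m) j - x m j)"
    unfolding z_rec[OF j] by (simp add: algebra_simps)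
  also have "\<dots> = tt m *\<^sub>R x (Suc m) j - (tt m - 1) *\<^sub>R x m j"
    unfolding t_beta by (simp add: algebra_simps)
  finally show ?thesis .
qed

definition Lam :: "(nat \<Rightarrow> 'a) \<Rightarrow> nat \<Rightarrow> real" where
  "Lam u n = (tt n)\<^sup>2 * (Psi (x (Suc n)) - Psi u)
           + 1/2 * nsq (\<lambda>j. tt n *\<^sub>R x (Suc n) j - (tt n - 1) *\<^sub>R x n j - u j)"

lemma Lam_bound:
  assumes u: "(\<Sum>j\<in>J. u j) = 0"
  shows "Lam u n \<le> 1/2 * nsq u + (\<Sum>k\<le>n. (tt k)\<^sup>2 * D k)"
proof (induction n)
  case 0
  have "nsq (\<lambda>j. tt 0 *\<^sub>R z 0 j - (tt 0 - 1) *\<^sub>R x 0 j - u j) = nsq u"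
    unfolding nsq_def by simp
  then show ?case using LS[OF u, of 0] unfolding Lam_def by simp
next
  case (Suc m)
  have e: "nsq (\<lambda>j. tt (Suc m) *\<^sub>R z (Suc m) j - (tt (Suc m) - 1) *\<^sub>R x (Suc m) j - u j)
      = nsq (\<lambda>j. tt m *\<^sub>R x (Suc m) j - (tt m - 1) *\<^sub>R x m j - u j)"
    unfolding nsq_def by (rule sum.cong[OF refl]) (simp add: w_eq)
  have "Lam u (Suc m) \<le> Lam u m + (tt (Suc m))\<^sup>2 * D (Suc m)"
    using LS[OF u, of "Suc m"] unfolding Lam_def e t_sq by simp
  then show ?case using Suc by simp
qed

lemma D_nonneg: "0 \<le> D n"
  unfolding D_def using dl_nonneg apos by simp

lemma tD_le: "(tt k)\<^sup>2 * D k \<le> (1 / \<alpha>\<^sup>2) * (1 / (real k + 1)\<^sup>2)"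
proof -
  have N0: "real N > 0" using N1 by simp
  have D: "D k \<le> 1 / (\<alpha>\<^sup>2 * (real k + 1)^4)"
  proof -
    have "D k \<le> real N * (1 / (real N * \<alpha> * (real k + 1)^4)) / \<alpha>"
      unfolding D_def using dl_le[of k] N0 apos by (intro divide_right_mono mult_left_mono) auto
    also have "\<dots> = 1 / (\<alpha>\<^sup>2 * (real k + 1)^4)" using N0 apos by (simp add: power2_eq_square)
    finally show ?thesis .
  qed
  have t: "(tt k)\<^sup>2 \<le> (real k + 1)\<^sup>2"
    using t_le[of k] t_ge1[of k] by (intro power_mono) auto
  have "(tt k)\<^sup>2 * D k \<le> (real k + 1)\<^sup>2 * (1 / (\<alpha>\<^sup>2 * (real k + 1)^4))"
    using t D D_nonneg by (intro mult_mono) auto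
  also have "\<dots> = (1 / \<alpha>\<^sup>2) * (1 / (real k + 1)\<^sup>2)"
  proof -
    have "r\<^sup>2 * (1 / (\<alpha>\<^sup>2 * r^4)) = (1 / \<alpha>\<^sup>2) * (1 / r\<^sup>2)" if "r > 0" for r :: real
      using that apos by (simp add: field_simps power2_eq_square power4_eq_xxxx)
    then show ?thesis by simp
  qed
  finally show ?thesis .
qed

definition S where "S = 2 / \<alpha>\<^sup>2"

lemma sumD: "(\<Sum>k\<le>n. (tt k)\<^sup>2 * D k) \<le> S"
proof -
  have "(\<Sum>k\<le>n. (tt k)\<^sup>2 * D k) \<le> (\<Sum>k\<le>n. (1 / \<alpha>\<^sup>2) * (1 / (real k + 1)\<^sup>2))"
    by (rule sum_mono) (rule tD_le)
  also have "\<dots> = (1 / \<alpha>\<^sup>2) * (\<Sum>k\<le>n. 1 / (real k + 1)\<^sup>2)" by (simp add: sum_distrib_left)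
  also have "\<dots> \<le> (1 / \<alpha>\<^sup>2) * 2"
    using sum_inv_sq[of n] by (intro mult_left_mono) (auto, smt (verit) divide_nonneg_nonneg of_nat_0_le_iff)
  finally show ?thesis unfolding S_def by simp
qed

lemma Lam_S: "(\<Sum>j\<in>J. u j) = 0 \<Longrightarrow> Lam u n \<le> 1/2 * nsq u + S"
  using Lam_bound[of u n] sumD[of n] by simp

lemma Psi_x_bound: "Psi (x n) \<le> Psi (\<lambda>j. 0) + S"
proof (cases n)
  case 0
  have "x 0 = (\<lambda>j. 0)" by auto
  then show ?thesis using 0 by (simp add: S_def)
next
  case (Suc m)
  have L: "Lam (\<lambda>j. 0) m \<le> S" using Lam_S[of "\<lambda>j. 0" m] by (simp add: nsq_def)
  have t: "(tt m)\<^sup>2 \<ge> 1" using t_ge1[of m] by (simp add: one_le_power)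
  have "(tt m)\<^sup>2 * (Psi (x (Suc m)) - Psi (\<lambda>j. 0)) \<le> S"
    using L nsq_nonneg[of "\<lambda>j. tt m *\<^sub>R x (Suc m) j - (tt m - 1) *\<^sub>R x m j - 0"] unfolding Lam_def
    by linarith
  then have "Psi (x (Suc m)) - Psi (\<lambda>j. 0) \<le> S"
    using t by (smt (verit, best) S_def divide_nonneg_nonneg mult_le_cancel_right1 zero_le_power2)
  then show ?thesis using Suc by simp
qed

lemma diff_bound: "(tt m - 1)\<^sup>2 * nsq (\<lambda>j. x (Suc m) j - x m j) \<le> nsq (x (Suc m)) + 2 * S"
proof -
  have L: "Lam (x (Suc m)) m \<le> 1/2 * nsq (x (Suc m)) + S" using Lam_S[OF sumx] .
  have e: "nsq (\<lambda>j. tt m *\<^sub>R x (Suc m) j - (tt m - 1) *\<^sub>R x m j - x (Suc m) j)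
      = (tt m - 1)\<^sup>2 * nsq (\<lambda>j. x (Suc m) j - x m j)"
    unfolding nsq_scale[symmetric] by (simp add: algebra_simps)
  show ?thesis using L unfolding Lam_def e by simp
qed

end
context dfl begin

lemma Fcont: "j \<in> J \<Longrightarrow> continuous_on UNIV (F j)"
  unfolding regul_def[abs_def] using cont by (intro continuous_intros) auto

lemma coercive: "\<exists>K. \<forall>\<zeta>. sqrt (nsq \<zeta>) \<le> Psi \<zeta> + K"
proof -
  have "\<forall>j\<in>J. \<exists>M. \<forall>v\<in>cball 0 1. F j v \<le> M"
  proof
    fix j assume j: "j \<in> J"
    have "continuous_on (cball 0 1) (F j)" using Fcont[OF j] by (rule continuous_on_subset) simp
    then obtain v0 where "\<forall>v\<in>cball 0 1. F j v \<le> F j v0"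
      using continuous_attains_sup[of "cball (0::'a) 1" "F j"] by auto
    then show "\<exists>M. \<forall>v\<in>cball 0 1. F j v \<le> M" by blast
  qed
  then obtain M where M: "\<And>j v. j \<in> J \<Longrightarrow> v \<in> cball 0 1 \<Longrightarrow> F j v \<le> M j" by metis
  define K where "K = (\<Sum>j\<in>J. M j) / \<alpha>"
  have "sqrt (nsq \<zeta>) \<le> Psi \<zeta> + K" for \<zeta>
  proof -
    define r where "r = sqrt (nsq \<zeta>)"
    have r0: "r \<ge> 0" unfolding r_def using nsq_nonneg by simp
    have rr: "r * r = nsq \<zeta>" unfolding r_def using nsq_nonneg by simp
    have nj: "norm (\<zeta> j) \<le> r" if "j \<in> J" for j
      unfolding r_def using nsq_comp[OF that, of \<zeta>] by (simp add: real_le_rsqrt)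
    have "(\<Sum>j\<in>J. inner (\<zeta> j) ((1 / r) *\<^sub>R \<zeta> j) - M j / \<alpha>) \<le> Psi \<zeta>"
      unfolding Psi_def
    proof (rule sum_mono)
      fix j assume j: "j \<in> J"
      have inb: "(1 / r) *\<^sub>R \<zeta> j \<in> cball 0 1"
      proof (cases "r = 0")
        case False
        then show ?thesis using nj[OF j] r0 by (simp add: field_simps)
      qed simp
      have "F j ((1 / r) *\<^sub>R \<zeta> j) / \<alpha> \<le> M j / \<alpha>"
        using M[OF j inb] apos by (simp add: divide_right_mono)
      then show "inner (\<zeta> j) ((1 / r) *\<^sub>R \<zeta> j) - M j / \<alpha> \<le> Psij j (\<zeta> j)"
        using Psij_ge[OF j, of "\<zeta> j" "(1 / r) *\<^sub>R \<zeta> j"] by linarith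
    qed
    moreover have "(\<Sum>j\<in>J. inner (\<zeta> j) ((1 / r) *\<^sub>R \<zeta> j) - M j / \<alpha>) = r - K"
    proof -
      have "(\<Sum>j\<in>J. inner (\<zeta> j) ((1 / r) *\<^sub>R \<zeta> j)) = nsq \<zeta> / r"
        unfolding nsq_def by (simp add: sum_divide_distrib power2_norm_eq_inner)
      also have "\<dots> = r" using rr r0 by (cases "r = 0") (auto simp: field_simps)
      finally show ?thesis unfolding K_def by (simp add: sum_subtractf sum_divide_distrib)
    qed
    ultimately show ?thesis unfolding r_def by linarith
  qed
  then show ?thesis by blast
qed

definition P where "P = Psi (\<lambda>j. 0) + S + (SOME K. \<forall>\<zeta>. sqrt (nsq \<zeta>) \<le> Psi \<zeta> + K)"

lemma P_prop: "sqrt (nsq (x n)) \<le> P"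
proof -
  have K: "\<forall>\<zeta>. sqrt (nsq \<zeta>) \<le> Psi \<zeta> + (SOME K. \<forall>\<zeta>. sqrt (nsq \<zeta>) \<le> Psi \<zeta> + K)"
    using someI_ex[OF coercive] .
  show ?thesis using K[rule_format, of "x n"] Psi_x_bound[of n] unfolding P_def by linarith
qed

lemma P_nonneg: "P \<ge> 0"
  using P_prop[of 0] by (smt (verit) real_sqrt_ge_zero nsq_nonneg)

lemma nsq_x: "nsq (x n) \<le> P\<^sup>2"
  using P_prop[of n] nsq_nonneg[of "x n"] P_nonneg
  by (metis real_sqrt_le_iff real_sqrt_pow2 sqrt_le_D)

lemma x_bound: "j \<in> J \<Longrightarrow> norm (x n j) \<le> P"
  using nsq_comp[of j "x n"] nsq_x[of n] P_nonneg
  by (meson order_trans power2_le_imp_le)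

lemma z_bound: assumes j: "j \<in> J" shows "norm (z n j) \<le> 3 * P"
proof (cases n)
  case 0 then show ?thesis using P_nonneg by simp
next
  case (Suc m)
  have "norm (z n j) \<le> norm (x (Suc m) j) + bt m * (norm (x (Suc m) j) + norm (x m j))"
    unfolding Suc z_rec[OF j] using beta_bounds[of m]
    by (smt (verit, best) mult_left_mono norm_scaleR norm_triangle_ineq norm_triangle_ineq4 abs_of_nonneg)
  also have "\<dots> \<le> P + 1 * (P + P)"
    using x_bound[OF j] beta_bounds[of m] P_nonneg
    by (intro add_mono mult_mono) auto
  finally show ?thesis by simp
qed

lemma inv_lim: "(\<lambda>m. c * inverse (real (Suc m))) \<longlonglongrightarrow> 0"
proof -
  have "(\<lambda>m. c * inverse (real (Suc m))) \<longlonglongrightarrow> c * 0"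
    by (intro tendsto_mult tendsto_const LIMSEQ_inverse_real_of_nat)
  then show ?thesis by simp
qed

lemma xdiff_lim: assumes j: "j \<in> J"
  shows "(\<lambda>m. norm (x (Suc m) j - x m j)) \<longlonglongrightarrow> 0"
proof -
  define C where "C = P\<^sup>2 + 2 * S"
  have b: "norm (norm (x (Suc m) j - x m j)) \<le> 4 * sqrt C * inverse (real (Suc m))" if m: "m \<ge> 1" for m
  proof -
    let ?v = "norm (x (Suc m) j - x m j)"
    have tm: "tt m - 1 \<ge> (real m + 1) / 4" using t_ge[of m] m by simp
    have "(tt m - 1)\<^sup>2 * ?v\<^sup>2 \<le> (tt m - 1)\<^sup>2 * nsq (\<lambda>j. x (Suc m) j - x m j)"
      using nsq_comp[OF j, of "\<lambda>j. x (Suc m) j - x m j"] by (intro mult_left_mono) auto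
    also have "\<dots> \<le> C" using diff_bound[of m] nsq_x[of "Suc m"] unfolding C_def by linarith
    finally have "((tt m - 1) * ?v)\<^sup>2 \<le> C" by (simp add: power_mult_distrib)
    then have "(tt m - 1) * ?v \<le> sqrt C" by (simp add: real_le_rsqrt)
    moreover have "(real m + 1) / 4 * ?v \<le> (tt m - 1) * ?v" using tm by (intro mult_right_mono) auto
    ultimately have "(real m + 1) / 4 * ?v \<le> sqrt C" by linarith
    then have "?v \<le> 4 * sqrt C / (real m + 1)" by (simp add: field_simps)
    then show ?thesis by (simp add: field_simps)
  qed
  show ?thesis
    by (rule Lim_null_comparison[OF _ inv_lim[of "4 * sqrt C"]])
       (use b in \<open>auto intro: eventually_sequentiallyI[of 1]\<close>)
qed

lemma g_lim: assumes j: "j \<in> J"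
  shows "(\<lambda>n. norm (th (Suc n) j - avg (Suc n))) \<longlonglongrightarrow> 0"
proof -
  have e: "th (Suc n) j - avg (Suc n) = z n j - x (Suc n) j" for n by (simp add: xS)
  have b: "norm (norm (z (Suc m) j - x (Suc (Suc m)) j))
      \<le> norm (x (Suc (Suc m)) j - x (Suc m) j) + norm (x (Suc m) j - x m j)" for m
  proof -
    have "z (Suc m) j - x (Suc (Suc m)) j = (x (Suc m) j - x (Suc (Suc m)) j) + bt m *\<^sub>R (x (Suc m) j - x m j)"
      unfolding z_rec[OF j] by simp
    then have "norm (z (Suc m) j - x (Suc (Suc m)) j) \<le> norm (x (Suc m) j - x (Suc (Suc m)) j) + bt m * norm (x (Suc m) j - x m j)"
      using beta_bounds[of m] by (metis abs_of_nonneg norm_scaleR norm_triangle_ineq)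
    also have "\<dots> \<le> norm (x (Suc (Suc m)) j - x (Suc m) j) + 1 * norm (x (Suc m) j - x m j)"
      using beta_bounds[of m] by (intro add_mono mult_right_mono) (auto simp: norm_minus_commute)
    finally show ?thesis by simp
  qed
  have l: "(\<lambda>m. norm (x (Suc (Suc m)) j - x (Suc m) j) + norm (x (Suc m) j - x m j)) \<longlonglongrightarrow> 0 + 0"
    by (intro tendsto_add LIMSEQ_Suc[OF xdiff_lim[OF j]] xdiff_lim[OF j])
  have "(\<lambda>m. norm (z (Suc m) j - x (Suc (Suc m)) j)) \<longlonglongrightarrow> 0"
    by (rule Lim_null_comparison[OF _ l[simplified]]) (use b in auto)
  then have "(\<lambda>n. norm (z n j - x (Suc n) j)) \<longlonglongrightarrow> 0" by (rule LIMSEQ_imp_Suc)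
  then show ?thesis unfolding e .
qed

end
context dfl begin

lemma dl_le1: "dl n \<le> 1 / \<alpha>"
proof -
  have "real N * \<alpha> * (real n + 1)^4 \<ge> 1 * \<alpha> * 1"
    using N1 apos by (intro mult_mono) (auto simp: one_le_power)
  moreover have pos: "0 < real N * \<alpha> * (real n + 1)^4" using N1 apos by simp
  ultimately have "1 / (real N * \<alpha> * (real n + 1)^4) \<le> 1 / \<alpha>"
    using apos by (intro divide_left_mono) (auto simp: mult_pos_pos)
  then show ?thesis using dl_le[of n] by linarith
qed

lemma th_bound_j: assumes j: "j \<in> J" shows "\<exists>B. \<forall>n. norm (th (Suc n) j) \<le> B"
proof -
  define c where "c = F j (th (Suc 0) j) - dl 0"
  have Fc: "c \<le> F j u" for u
  proof -
    have "0 \<le> \<alpha> / 2 * (norm (u - th (Suc 0) j))\<^sup>2" using apos by simp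
    then show ?thesis using star[OF j, of 0 u] unfolding c_def by simp
  qed
  define A where "A = F j 0 - c + 1 / \<alpha>"
  have "norm (th (Suc n) j) \<le> sqrt (4 * (A / \<alpha>) + 36 * P\<^sup>2)" for n
  proof -
    let ?t = "th (Suc n) j"
    define r where "r = norm ?t"
    have s: "F j ?t + \<alpha> * inner (z n j) (0 - ?t) + \<alpha> / 2 * (norm (0 - ?t))\<^sup>2 - dl n \<le> F j 0"
      using star[OF j, of n 0] .
    have i: "inner (z n j) ?t \<le> 3 * P * r"
      unfolding r_def using z_bound[OF j, of n]
      by (smt (verit, best) Cauchy_Schwarz_ineq2 mult_right_mono norm_ge_zero)
    have h: "\<alpha> / 2 * r\<^sup>2 \<le> A + \<alpha> * (3 * P * r)"
    proof -
      have "\<alpha> * inner (z n j) ?t \<le> \<alpha> * (3 * P * r)" using i apos by (intro mult_left_mono) auto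
      then show ?thesis using s Fc[of ?t] dl_le1[of n] unfolding A_def r_def by (simp add: inner_minus_right)
    qed
    have h2: "r\<^sup>2 \<le> 2 * (A / \<alpha>) + 6 * P * r"
    proof -
      have "(\<alpha> / 2 * r\<^sup>2) * (2 / \<alpha>) \<le> (A + \<alpha> * (3 * P * r)) * (2 / \<alpha>)"
        using h apos by (intro mult_right_mono) auto
      then show ?thesis using apos by (simp add: field_simps)
    qed
    have h3: "6 * P * r \<le> 18 * P\<^sup>2 + r\<^sup>2 / 2"
    proof -
      have "0 \<le> (r - 6 * P)\<^sup>2" by simp
      then show ?thesis by (simp add: power2_eq_square algebra_simps)
    qed
    have "r\<^sup>2 \<le> 4 * (A / \<alpha>) + 36 * P\<^sup>2" using h2 h3 by linarith
    then show ?thesis unfolding r_def by (simp add: real_le_rsqrt)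
  qed
  then show ?thesis by blast
qed

lemma th_bound: "\<exists>B. \<forall>n. \<forall>j\<in>J. norm (th (Suc n) j) \<le> B"
proof -
  have "\<forall>j\<in>J. \<exists>B. \<forall>n. norm (th (Suc n) j) \<le> B" using th_bound_j by blast
  then obtain B where B: "\<And>j n. j \<in> J \<Longrightarrow> norm (th (Suc n) j) \<le> B j" by metis
  have "norm (th (Suc n) j) \<le> (\<Sum>i\<in>J. \<bar>B i\<bar>)" if "j \<in> J" for n j
  proof -
    have "B j \<le> \<bar>B j\<bar>" by simp
    also have "\<dots> \<le> (\<Sum>i\<in>J. \<bar>B i\<bar>)" by (rule member_le_sum) (use that in auto)
    finally show ?thesis using B[OF that, of n] by linarith
  qed
  then show ?thesis by blast
qed

lemma avg_bound: assumes B: "\<forall>n. \<forall>j\<in>J. norm (th (Suc n) j) \<le> B"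
  shows "norm (avg (Suc n)) \<le> B"
proof -
  have N0: "real N > 0" using N1 by simp
  have "norm (avg (Suc n)) = (1 / real N) * norm (\<Sum>j\<in>J. th (Suc n) j)"
    unfolding dualfl_avg_def by simp
  also have "\<dots> \<le> (1 / real N) * (\<Sum>j\<in>J. norm (th (Suc n) j))"
    using N0 by (intro mult_left_mono norm_sum) auto
  also have "\<dots> \<le> (1 / real N) * (\<Sum>j\<in>J. B)"
    using N0 B by (intro mult_left_mono sum_mono) auto
  also have "\<dots> = B" using N0 by simp
  finally show ?thesis .
qed

lemma Fdiff_lim: assumes j: "j \<in> J"
  shows "(\<lambda>n. F j (avg (Suc n)) - F j (th (Suc n) j)) \<longlonglongrightarrow> 0"
proof -
  obtain B where B: "\<forall>n. \<forall>j\<in>J. norm (th (Suc n) j) \<le> B" using th_bound by blast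
  have uc: "uniformly_continuous_on (cball 0 B) (F j)"
    by (rule compact_uniformly_continuous[OF continuous_on_subset[OF Fcont[OF j]]]) auto
  have "(\<lambda>n. dist (F j (avg (Suc n))) (F j (th (Suc n) j))) \<longlonglongrightarrow> 0"
    using uc unfolding uniformly_continuous_on_sequentially
  proof (elim allE impE)
    show "(\<forall>n. avg (Suc n) \<in> cball 0 B) \<and> (\<forall>n. th (Suc n) j \<in> cball 0 B) \<and>
        (\<lambda>n. dist (avg (Suc n)) (th (Suc n) j)) \<longlonglongrightarrow> 0"
      using avg_bound[OF B] B j g_lim[OF j] by (auto simp: dist_norm norm_minus_commute)
  qed
  then show ?thesis by (simp add: dist_real_def tendsto_rabs_zero_iff)
qed

lemma final:
  assumes eta: "\<eta> > 0"
  shows "\<exists>n0. \<forall>n\<ge>n0. avg_obj N f (avg n) \<le> avg_obj N f u0 + \<alpha> / 2 * (norm u0)\<^sup>2 + \<eta>"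
proof -
  have N0: "real N > 0" using N1 by simp
  define e where "e n = (\<Sum>j\<in>J. F j (avg (Suc n)) - F j (th (Suc n) j))
      + \<alpha> * (\<Sum>j\<in>J. inner (z n j) (th (Suc n) j - avg (Suc n))) + real N * dl n" for n
  have ineq: "(\<Sum>j\<in>J. F j (avg (Suc n))) \<le> (\<Sum>j\<in>J. F j u0) + e n" for n
  proof -
    have s: "F j (th (Suc n) j) + \<alpha> * inner (z n j) u0 - \<alpha> * inner (z n j) (th (Suc n) j - avg (Suc n))
        - \<alpha> * inner (z n j) (avg (Suc n)) - dl n \<le> F j u0" if j: "j \<in> J" for j
    proof -
      have "0 \<le> \<alpha> / 2 * (norm (u0 - th (Suc n) j))\<^sup>2" using apos by simp
      then show ?thesis using star[OF j, of n u0] by (simp add: inner_diff_right algebra_simps)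
    qed
    have "(\<Sum>j\<in>J. F j (th (Suc n) j) + \<alpha> * inner (z n j) u0 - \<alpha> * inner (z n j) (th (Suc n) j - avg (Suc n))
        - \<alpha> * inner (z n j) (avg (Suc n)) - dl n) \<le> (\<Sum>j\<in>J. F j u0)"
      by (rule sum_mono) (rule s)
    moreover have "(\<Sum>j\<in>J. inner (z n j) u0) = 0" using sumz[of n] by (simp add: inner_sum_left[symmetric])
    moreover have "(\<Sum>j\<in>J. inner (z n j) (avg (Suc n))) = 0" using sumz[of n] by (simp add: inner_sum_left[symmetric])
    ultimately have "(\<Sum>j\<in>J. F j (th (Suc n) j)) - \<alpha> * (\<Sum>j\<in>J. inner (z n j) (th (Suc n) j - avg (Suc n)))
        - real N * dl n \<le> (\<Sum>j\<in>J. F j u0)"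
      by (simp add: sum.distrib sum_subtractf sum_distrib_left[symmetric])
    then show ?thesis unfolding e_def by (simp add: sum_subtractf)
  qed
  have el: "e \<longlonglongrightarrow> 0"
  proof -
    have l1: "(\<lambda>n. \<Sum>j\<in>J. F j (avg (Suc n)) - F j (th (Suc n) j)) \<longlonglongrightarrow> (\<Sum>j\<in>J. 0)"
      by (intro tendsto_sum Fdiff_lim) auto
    have l2: "(\<lambda>n. inner (z n j) (th (Suc n) j - avg (Suc n))) \<longlonglongrightarrow> 0" if j: "j \<in> J" for j
    proof (rule Lim_null_comparison)
      show "\<forall>\<^sub>F n in sequentially. norm (inner (z n j) (th (Suc n) j - avg (Suc n)))
              \<le> 3 * P * norm (th (Suc n) j - avg (Suc n))"
      proof (rule always_eventually, rule allI)
        fix n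
        have "norm (inner (z n j) (th (Suc n) j - avg (Suc n))) \<le> norm (z n j) * norm (th (Suc n) j - avg (Suc n))"
          by (simp add: Cauchy_Schwarz_ineq2)
        also have "\<dots> \<le> 3 * P * norm (th (Suc n) j - avg (Suc n))"
          using z_bound[OF j] by (intro mult_right_mono) auto
        finally show "norm (inner (z n j) (th (Suc n) j - avg (Suc n))) \<le> 3 * P * norm (th (Suc n) j - avg (Suc n))" .
      qed
      show "(\<lambda>n. 3 * P * norm (th (Suc n) j - avg (Suc n))) \<longlonglongrightarrow> 0"
        using tendsto_mult[OF tendsto_const g_lim[OF j], of "3 * P"] by simp
    qed
    have l2': "(\<lambda>n. \<alpha> * (\<Sum>j\<in>J. inner (z n j) (th (Suc n) j - avg (Suc n)))) \<longlonglongrightarrow> \<alpha> * (\<Sum>j\<in>J. 0)"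
      by (intro tendsto_mult tendsto_const tendsto_sum l2) auto
    have l3: "(\<lambda>n. real N * dl n) \<longlonglongrightarrow> 0"
    proof (rule Lim_null_comparison)
      show "\<forall>\<^sub>F n in sequentially. norm (real N * dl n) \<le> (1 / \<alpha>) * inverse (real (Suc n))"
      proof (rule always_eventually, rule allI)
        fix n
        have "real N * \<alpha> * (real n + 1) * 1 \<le> real N * \<alpha> * (real n + 1) * (real n + 1)^3"
          using N0 apos by (intro mult_left_mono) (auto simp: one_le_power)
        then have q: "real N * \<alpha> * (real n + 1) \<le> real N * \<alpha> * (real n + 1)^4"
          by (simp add: power_Suc[symmetric] mult.assoc del: power_Suc)
        have d1: "real N * dl n \<le> real N * (1 / (real N * \<alpha> * (real n + 1)^4))"
          using dl_le[of n] N0 by (intro mult_left_mono) auto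
        have pos1: "0 < real N * \<alpha> * (real n + 1)" using N0 apos by simp
        have pos4: "0 < real N * \<alpha> * (real n + 1)^4" using q pos1 by linarith
        have "1 / (real N * \<alpha> * (real n + 1)^4) \<le> 1 / (real N * \<alpha> * (real n + 1))"
          by (rule divide_left_mono[OF q]) (use mult_pos_pos[OF pos4 pos1] in auto)
        then have d2: "real N * (1 / (real N * \<alpha> * (real n + 1)^4)) \<le> real N * (1 / (real N * \<alpha> * (real n + 1)))"
          using N0 by (intro mult_left_mono) auto
        have d3: "real N * (1 / (real N * \<alpha> * (real n + 1))) = (1 / \<alpha>) * inverse (real (Suc n))"
          using N0 apos by (simp add: divide_simps)
        show "norm (real N * dl n) \<le> (1 / \<alpha>) * inverse (real (Suc n))"
          using d1 d2 d3 dl_nonneg[of n] N0 by simp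
      qed
      show "(\<lambda>n. 1 / \<alpha> * inverse (real (Suc n))) \<longlonglongrightarrow> 0" by (rule inv_lim)
    qed
    have "e \<longlonglongrightarrow> 0 + 0 + 0"
      unfolding e_def[abs_def] using l1 l2' l3 by (intro tendsto_add) auto
    then show ?thesis by simp
  qed
  have "\<forall>\<^sub>F n in sequentially. e n < real N * \<eta>"
    using order_tendstoD(2)[OF el] N0 eta by simp
  then obtain n0 where n0: "\<And>n. n \<ge> n0 \<Longrightarrow> e n < real N * \<eta>"
    unfolding eventually_sequentially by blast
  have "avg_obj N f (avg n) \<le> avg_obj N f u0 + \<alpha> / 2 * (norm u0)\<^sup>2 + \<eta>" if n: "n \<ge> Suc n0" for n
  proof -
    obtain m where m: "n = Suc m" "m \<ge> n0" using n by (cases n) auto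
    have fF: "(\<Sum>j\<in>J. f j (avg n)) \<le> (\<Sum>j\<in>J. F j (avg n))"
      by (rule sum_mono) (use apos in \<open>simp add: regul_def\<close>)
    have Fu: "(\<Sum>j\<in>J. F j u0) = (\<Sum>j\<in>J. f j u0) + real N * (\<alpha> / 2 * (norm u0)\<^sup>2)"
      by (simp add: regul_def sum.distrib)
    have "(\<Sum>j\<in>J. f j (avg n)) \<le> (\<Sum>j\<in>J. f j u0) + real N * (\<alpha> / 2 * (norm u0)\<^sup>2) + real N * \<eta>"
      using fF ineq[of m] Fu n0[OF m(2)] unfolding m(1) by linarith
    then have "(1 / real N) * (\<Sum>j\<in>J. f j (avg n))
        \<le> (1 / real N) * ((\<Sum>j\<in>J. f j u0) + real N * (\<alpha> / 2 * (norm u0)\<^sup>2) + real N * \<eta>)"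
      using N0 by (intro mult_left_mono) auto
    then show ?thesis unfolding avg_obj_def using N0 by (simp add: field_simps)
  qed
  then show ?thesis by blast
qed

end

theorem theorem4p1:
  fixes f :: "nat \<Rightarrow> 'a::euclidean_space \<Rightarrow> real"
    and N :: nat
    and \<theta>s :: 'a
    and \<gamma> :: real
    and th :: "real \<Rightarrow> nat \<Rightarrow> nat \<Rightarrow> 'a"
  assumes N_pos: "N \<ge> 1"
    and convex: "\<forall>j\<in>{1..N}. convex_on UNIV (f j)"
    and cont: "\<forall>j\<in>{1..N}. continuous_on UNIV (f j)"
    and coercive: "filterlim (avg_obj N f) at_top at_infinity"
    and minimizer: "\<forall>\<theta>. avg_obj N f \<theta>s \<le> avg_obj N f \<theta>"
    and gamma_pos: "\<gamma> > 0"
    and init: "\<forall>\<alpha>>0. \<forall>j\<in>{1..N}. th \<alpha> 0 j = 0"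
    and inexact: "\<forall>\<alpha>>0. \<forall>n. \<forall>j\<in>{1..N}.
        dualfl_gap (regul \<alpha> (f j)) \<alpha> (dualfl_zeta 0 N (th \<alpha>) j n) (th \<alpha> (Suc n) j)
          \<le> ereal (1 / (real N * \<alpha> * (real n + 1) powr (4 + \<gamma>)))"
  shows "\<forall>\<epsilon>>0. \<exists>\<alpha>0>0. \<forall>\<alpha>\<in>{0<..<\<alpha>0}. \<exists>n0. \<forall>n\<ge>n0.
           \<bar>avg_obj N f (dualfl_avg N (th \<alpha>) n) - avg_obj N f \<theta>s\<bar> < \<epsilon>"
proof (intro allI impI)
  fix \<epsilon> :: real assume eps: "\<epsilon> > 0"
  define \<alpha>0 where "\<alpha>0 = \<epsilon> / ((norm \<theta>s)\<^sup>2 + 1)"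
  have pn: "0 < (norm \<theta>s)\<^sup>2 + 1" using zero_le_power2[of "norm \<theta>s"] by linarith
  have a0: "\<alpha>0 > 0" unfolding \<alpha>0_def using eps pn by (rule divide_pos_pos)
  have "\<forall>\<alpha>\<in>{0<..<\<alpha>0}. \<exists>n0. \<forall>n\<ge>n0.
           \<bar>avg_obj N f (dualfl_avg N (th \<alpha>) n) - avg_obj N f \<theta>s\<bar> < \<epsilon>"
  proof
    fix \<alpha> assume "\<alpha> \<in> {0<..<\<alpha>0}"
    then have apos: "\<alpha> > 0" and alt: "\<alpha> < \<alpha>0" by auto
    define dl where "dl n = 1 / (real N * \<alpha> * (real n + 1) powr (4 + \<gamma>))" for n
    have N0: "real N > 0" using N_pos by simp
    interpret d: dfl N f "th \<alpha>" \<alpha> dl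
    proof
      show "N \<ge> 1" by fact
      show "\<alpha> > 0" by fact
      show "\<And>j. j \<in> {1..N} \<Longrightarrow> continuous_on UNIV (f j)" using cont by auto
      show "\<And>j. j \<in> {1..N} \<Longrightarrow> th \<alpha> 0 j = 0" using init apos by auto
      show "\<And>n. 0 \<le> dl n" unfolding dl_def using N0 apos by simp
      show "dl n \<le> 1 / (real N * \<alpha> * (real n + 1)^4)" for n
      proof -
        have "(real n + 1) powr 4 \<le> (real n + 1) powr (4 + \<gamma>)"
          using gamma_pos by (intro powr_mono) auto
        then have p: "(real n + 1)^4 \<le> (real n + 1) powr (4 + \<gamma>)" by simp
        have pos: "0 < real N * \<alpha> * (real n + 1)^4" using N0 apos by simp
        have le: "real N * \<alpha> * (real n + 1)^4 \<le> real N * \<alpha> * (real n + 1) powr (4 + \<gamma>)"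
          using p N0 apos by (intro mult_left_mono) auto
        have pos2: "0 < real N * \<alpha> * (real n + 1) powr (4 + \<gamma>)" using pos le by linarith
        show ?thesis unfolding dl_def
          by (rule divide_left_mono[OF le]) (use mult_pos_pos[OF pos2 pos] in auto)
      qed
      show "\<And>n j u. j \<in> {1..N} \<Longrightarrow> regul \<alpha> (f j) (th \<alpha> (Suc n) j)
        + \<alpha> * inner (dualfl_zeta 0 N (th \<alpha>) j n) (u - th \<alpha> (Suc n) j)
        + \<alpha> / 2 * (norm (u - th \<alpha> (Suc n) j))\<^sup>2 - dl n \<le> regul \<alpha> (f j) u"
        unfolding dl_def using inexact apos by (intro gap_star) auto
    qed
    have "\<epsilon> / 2 > 0" using eps by simp
    from d.final[OF this, of \<theta>s] obtain n0 where
      n0: "\<And>n. n \<ge> n0 \<Longrightarrow> avg_obj N f (dualfl_avg N (th \<alpha>) n) \<le> avg_obj N f \<theta>s + \<alpha> / 2 * (norm \<theta>s)\<^sup>2 + \<epsilon> / 2"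
      by blast
    have small: "\<alpha> / 2 * (norm \<theta>s)\<^sup>2 < \<epsilon> / 2"
    proof -
      have "\<alpha> * (norm \<theta>s)\<^sup>2 \<le> \<alpha> * ((norm \<theta>s)\<^sup>2 + 1)" using apos by simp
      also have "\<dots> < \<alpha>0 * ((norm \<theta>s)\<^sup>2 + 1)" using alt pn by (intro mult_strict_right_mono) auto
      also have "\<dots> = \<epsilon>" unfolding \<alpha>0_def using pn by simp
      finally show ?thesis by simp
    qed
    show "\<exists>n0. \<forall>n\<ge>n0. \<bar>avg_obj N f (dualfl_avg N (th \<alpha>) n) - avg_obj N f \<theta>s\<bar> < \<epsilon>"
    proof (intro exI allI impI)
      fix n assume nn: "n \<ge> n0"
      have u: "avg_obj N f (dualfl_avg N (th \<alpha>) n) \<le> avg_obj N f \<theta>s + \<alpha> / 2 * (norm \<theta>s)\<^sup>2 + \<epsilon> / 2"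
        using n0[OF nn] .
      have l: "avg_obj N f \<theta>s \<le> avg_obj N f (dualfl_avg N (th \<alpha>) n)" using minimizer by blast
      show "\<bar>avg_obj N f (dualfl_avg N (th \<alpha>) n) - avg_obj N f \<theta>s\<bar> < \<epsilon>"
        using u l small by (simp add: abs_if)
    qed
  qed
  then show "\<exists>\<alpha>0>0. \<forall>\<alpha>\<in>{0<..<\<alpha>0}. \<exists>n0. \<forall>n\<ge>n0.
           \<bar>avg_obj N f (dualfl_avg N (th \<alpha>) n) - avg_obj N f \<theta>s\<bar> < \<epsilon>"
    using a0 by blast
qed

end
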